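(* Let $S\ni h$ be a polarized lattice. A subset $\Gamma\subset\operatorname{root}_1(S,h)$ admits a Weyl chamber for $\operatorname{rt}(S,h)$ compatible with $\Gamma$ if and only if there is no separating root $r\in\operatorname{root}_0(S,h)$. In this case, each Weyl chamber $\Delta'$ for the lattice $S':=(\mathbb{Z}h+\mathbb{Z}\Gamma)^\perp\subset S$ is a face of a unique Weyl chamber $\Delta$ for $\operatorname{rt}(S,h)$ compatible with $\Gamma$.
   Context: All lattices are even and nondegenerate; $(S,h)$ polarized means $S$ hyperbolic and $h^2>0$. $\operatorname{root}_n(S,h)=\{r\in S: r^2=-2,\ r\cdot h=n\}$; $\operatorname{rt}(S,h)$ is the root lattice spanned by $\operatorname{root}_0(S,h)$; a Weyl chamber for the root lattice of a negative definite lattice $S'$ is one for the lattice generated by roots of $S'$. A Weyl chamber $\Delta$ is determined by its set of positive roots $P_\Delta$ (closed half of the roots); $\mathfrak{b}(\Delta)$ are its simple roots. $\operatorname{Fn}_\Delta(S,h)=\{l\in\operatorname{root}_1(S,h): l\cdot e\ge0\ \forall e\in\mathfrak{b}(\Delta)\}$. A Weyl chamber $\Delta$ is compatible with $\Gamma$ if $\Gamma\subset\operatorname{Fn}_\Delta(S,h)$. A root $r\in\operatorname{root}_0(S,h)$ is separating (with respect to $\Gamma$) if there are $u,v\in\Gamma$ with $r\cdot u>0$ and $r\cdot v<0$. That $\Delta'$ is a face of $\Delta$ means $P_\Delta\cap S'=P_{\Delta'}$. *)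

theory Defs
  imports "HOL-Analysis.Analysis"
begin

text \<open>An (integral) lattice of rank CARD('n) is modelled as int^'n with a
  symmetric integer Gram matrix G; the form is bf G.\<close>

definition bf :: "int^'n^'n \<Rightarrow> int^'n \<Rightarrow> int^'n \<Rightarrow> int" where
  "bf G x y = (\<Sum>i\<in>UNIV. \<Sum>j\<in>UNIV. x$i * G$i$j * y$j)"

definition rbf :: "int^'n^'n \<Rightarrow> real^'n \<Rightarrow> real^'n \<Rightarrow> real" where
  "rbf G x y = (\<Sum>i\<in>UNIV. \<Sum>j\<in>UNIV. x$i * of_int (G$i$j) * y$j)"

definition rvec :: "int^'n \<Rightarrow> real^'n" where
  "rvec x = (\<chi> i. of_int (x$i))"

definition even_lattice :: "int^'n^'n \<Rightarrow> bool" where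
  "even_lattice G \<longleftrightarrow> (\<forall>i j. G$i$j = G$j$i) \<and> (\<forall>x. even (bf G x x))"

definition nondegenerate :: "int^'n^'n \<Rightarrow> bool" where
  "nondegenerate G \<longleftrightarrow> (\<forall>x. (\<forall>y. bf G x y = 0) \<longrightarrow> x = 0)"

definition posdef_subspace :: "int^'n^'n \<Rightarrow> (real^'n) set \<Rightarrow> bool" where
  "posdef_subspace G V \<longleftrightarrow> subspace V \<and> (\<forall>v\<in>V. v \<noteq> 0 \<longrightarrow> rbf G v v > 0)"

text \<open>Hyperbolic: nondegenerate with positive index of inertia 1.\<close>
definition hyperbolic :: "int^'n^'n \<Rightarrow> bool" where
  "hyperbolic G \<longleftrightarrow> nondegenerate G
     \<and> (\<exists>V. posdef_subspace G V \<and> dim V = 1)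
     \<and> (\<forall>V. posdef_subspace G V \<longrightarrow> dim V \<le> 1)"

definition polarized :: "int^'n^'n \<Rightarrow> int^'n \<Rightarrow> bool" where
  "polarized G h \<longleftrightarrow> even_lattice G \<and> hyperbolic G \<and> bf G h h > 0"

definition root_n :: "int^'n^'n \<Rightarrow> int^'n \<Rightarrow> int \<Rightarrow> (int^'n) set" where
  "root_n G h n = {r. bf G r r = -2 \<and> bf G r h = n}"

inductive_set zspan :: "(int^'n) set \<Rightarrow> (int^'n) set" for A where
  zspan_zero: "0 \<in> zspan A"
| zspan_add: "x \<in> zspan A \<Longrightarrow> a \<in> A \<Longrightarrow> x + a \<in> zspan A"
| zspan_diff: "x \<in> zspan A \<Longrightarrow> a \<in> A \<Longrightarrow> x - a \<in> zspan A"

definition lattice_roots :: "int^'n^'n \<Rightarrow> (int^'n) set \<Rightarrow> (int^'n) set" where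
  "lattice_roots G L = {r \<in> L. bf G r r = -2}"

definition rt :: "int^'n^'n \<Rightarrow> int^'n \<Rightarrow> (int^'n) set" where
  "rt G h = zspan (root_n G h 0)"

definition perp_lattice :: "int^'n^'n \<Rightarrow> (int^'n) set \<Rightarrow> (int^'n) set" where
  "perp_lattice G A = {x. \<forall>a\<in>A. bf G x a = 0}"

text \<open>A Weyl chamber for a (finite) set of roots \<Phi>, represented by its set of
  positive roots: the roots positive on a vector of the chamber (a vector of the
  real span of \<Phi> orthogonal to no root).\<close>
definition weyl_chamber_roots :: "int^'n^'n \<Rightarrow> (int^'n) set \<Rightarrow> (int^'n) set \<Rightarrow> bool" where
  "weyl_chamber_roots G \<Phi> P \<longleftrightarrow>
     (\<exists>x \<in> span (rvec ` \<Phi>). (\<forall>r\<in>\<Phi>. rbf G (rvec r) x \<noteq> 0)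
        \<and> P = {r\<in>\<Phi>. rbf G (rvec r) x > 0})"

definition weyl_chamber :: "int^'n^'n \<Rightarrow> (int^'n) set \<Rightarrow> (int^'n) set \<Rightarrow> bool" where
  "weyl_chamber G L P \<longleftrightarrow>
     weyl_chamber_roots G (lattice_roots G (zspan (lattice_roots G L))) P"

definition simple_roots :: "(int^'n) set \<Rightarrow> (int^'n) set" where
  "simple_roots P = {e\<in>P. \<not> (\<exists>a\<in>P. \<exists>b\<in>P. e = a + b)}"

definition Fn :: "int^'n^'n \<Rightarrow> int^'n \<Rightarrow> (int^'n) set \<Rightarrow> (int^'n) set" where
  "Fn G h P = {l \<in> root_n G h 1. \<forall>e\<in>simple_roots P. bf G l e \<ge> 0}"

definition compatible :: "int^'n^'n \<Rightarrow> int^'n \<Rightarrow> (int^'n) set \<Rightarrow> (int^'n) set \<Rightarrow> bool" where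
  "compatible G h P \<Gamma> \<longleftrightarrow> \<Gamma> \<subseteq> Fn G h P"

definition separating :: "int^'n^'n \<Rightarrow> int^'n \<Rightarrow> (int^'n) set \<Rightarrow> int^'n \<Rightarrow> bool" where
  "separating G h \<Gamma> r \<longleftrightarrow> r \<in> root_n G h 0 \<and>
     (\<exists>u\<in>\<Gamma>. \<exists>v\<in>\<Gamma>. bf G r u > 0 \<and> bf G r v < 0)"

definition is_face :: "(int^'n) set \<Rightarrow> (int^'n) set \<Rightarrow> (int^'n) set \<Rightarrow> bool" where
  "is_face P P' L' \<longleftrightarrow> P \<inter> L' = P'"

end

theory Submission
  imports Defs
begin


lemma bf_add_left: "bf G (x + y) z = bf G x z + bf G y z"
  by (simp add: bf_def sum.distrib[symmetric] algebra_simps)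
lemma bf_add_right: "bf G z (x + y) = bf G z x + bf G z y"
  by (simp add: bf_def sum.distrib[symmetric] algebra_simps)
lemma bf_diff_left: "bf G (x - y) z = bf G x z - bf G y z"
  by (simp add: bf_def sum_subtractf[symmetric] algebra_simps)
lemma bf_diff_right: "bf G z (x - y) = bf G z x - bf G z y"
  by (simp add: bf_def sum_subtractf[symmetric] algebra_simps)
lemma bf_neg_left: "bf G (- x) z = - bf G x z"
  by (simp add: bf_def sum_negf[symmetric])
lemma bf_neg_right: "bf G z (- x) = - bf G z x"
  by (simp add: bf_def sum_negf[symmetric])
lemma bf_smult_left: "bf G (c *s x) z = c * bf G x z"
  by (simp add: bf_def sum_distrib_left algebra_simps)
lemma bf_smult_right: "bf G z (c *s x) = c * bf G z x"
  by (simp add: bf_def sum_distrib_left algebra_simps)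
lemma bf_zero_left[simp]: "bf G 0 z = 0" by (simp add: bf_def)
lemma bf_zero_right[simp]: "bf G z 0 = 0" by (simp add: bf_def)
lemma bf_sym: "\<forall>i j. G$i$j = G$j$i \<Longrightarrow> bf G x y = bf G y x"
  unfolding bf_def by (subst sum.swap) (simp add: algebra_simps)

lemmas bf_simps = bf_add_left bf_add_right bf_diff_left bf_diff_right bf_neg_left bf_neg_right
  bf_smult_left bf_smult_right

lemma rbf_add_left: "rbf G (x + y) z = rbf G x z + rbf G y z"
  by (simp add: rbf_def sum.distrib[symmetric] algebra_simps)
lemma rbf_add_right: "rbf G z (x + y) = rbf G z x + rbf G z y"
  by (simp add: rbf_def sum.distrib[symmetric] algebra_simps)
lemma rbf_diff_left: "rbf G (x - y) z = rbf G x z - rbf G y z"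
  by (simp add: rbf_def sum_subtractf[symmetric] algebra_simps)
lemma rbf_diff_right: "rbf G z (x - y) = rbf G z x - rbf G z y"
  by (simp add: rbf_def sum_subtractf[symmetric] algebra_simps)
lemma rbf_neg_left: "rbf G (- x) z = - rbf G x z"
  by (simp add: rbf_def sum_negf[symmetric])
lemma rbf_neg_right: "rbf G z (- x) = - rbf G z x"
  by (simp add: rbf_def sum_negf[symmetric])
lemma rbf_scale_left: "rbf G (c *\<^sub>R x) z = c * rbf G x z"
  by (simp add: rbf_def sum_distrib_left algebra_simps)
lemma rbf_scale_right: "rbf G z (c *\<^sub>R x) = c * rbf G z x"
  by (simp add: rbf_def sum_distrib_left algebra_simps)
lemma rbf_zero_left[simp]: "rbf G 0 z = 0" by (simp add: rbf_def)
lemma rbf_zero_right[simp]: "rbf G z 0 = 0" by (simp add: rbf_def)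
lemma rbf_sym: "\<forall>i j. G$i$j = G$j$i \<Longrightarrow> rbf G x y = rbf G y x"
  unfolding rbf_def by (subst sum.swap) (simp add: algebra_simps)
lemmas rbf_simps = rbf_add_left rbf_add_right rbf_diff_left rbf_diff_right rbf_neg_left rbf_neg_right
  rbf_scale_left rbf_scale_right

lemma rbf_rvec: "rbf G (rvec x) (rvec y) = of_int (bf G x y)"
  by (simp add: rbf_def bf_def rvec_def)
lemma rvec_add: "rvec (x + y) = rvec x + rvec y"
  by (simp add: rvec_def vec_eq_iff)
lemma rvec_diff: "rvec (x - y) = rvec x - rvec y"
  by (simp add: rvec_def vec_eq_iff)
lemma rvec_neg: "rvec (- x) = - rvec x"
  by (simp add: rvec_def vec_eq_iff)
lemma rvec_smult: "rvec (c *s x) = of_int c *\<^sub>R rvec x"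
  by (simp add: rvec_def vec_eq_iff)
lemma rvec_eq0: "rvec x = 0 \<longleftrightarrow> x = 0"
  by (simp add: rvec_def vec_eq_iff)

lemma rbf_linear_right: "linear (rbf G v)"
  by (rule linearI) (simp_all add: rbf_simps)
lemma rbf_cont: "continuous_on A (\<lambda>v. rbf G v w)"
  unfolding rbf_def by (intro continuous_intros)
lemma rbf_cont2: "continuous_on A (\<lambda>v. rbf G v v)"
  unfolding rbf_def by (intro continuous_intros)



lemma det_of_int_mat: "det (\<chi> i j. (of_int (A$i$j) :: 'a::field)) = of_int (det A)"
  unfolding det_def by (simp add: of_int_sum of_int_prod)

lemma common_denom: "finite I \<Longrightarrow> \<exists>d::int. d > 0 \<and> (\<forall>i\<in>I. of_int d * (f i :: rat) \<in> \<int>)"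
proof (induction I rule: finite_induct)
  case empty then show ?case by (intro exI[of _ 1]) simp
next
  case (insert a I)
  then obtain d1 where d1: "d1 > 0" "\<forall>i\<in>I. of_int d1 * f i \<in> \<int>" by blast
  obtain n m where nm: "quotient_of (f a) = (n, m)" by (cases "quotient_of (f a)")
  then have m: "m > 0" "f a = of_int n / of_int m" using quotient_of_denom_pos quotient_of_div by blast+
  show ?case
  proof (intro exI[of _ "d1 * m"] conjI ballI)
    show "0 < d1 * m" using d1 m by simp
    fix i assume "i \<in> insert a I"
    then show "of_int (d1 * m) * f i \<in> \<int>"
    proof
      assume "i = a"
      have "of_int m * f a = (of_int n :: rat)" using m by simp
      then have "of_int (d1 * m) * f i = (of_int (d1 * n) :: rat)" using \<open>i = a\<close> by (simp add: mult.assoc)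
      then show ?thesis by (metis Ints_of_int)
    next
      assume "i \<in> I"
      then have "of_int (d1 * m) * f i = of_int m * (of_int d1 * f i)" by simp
      then show ?thesis using d1 \<open>i \<in> I\<close> by (metis Ints_mult Ints_of_int)
    qed
  qed
qed

lemma rbf_axis: "rbf G v (axis j 1) = (\<Sum>i\<in>UNIV. v$i * of_int (G$i$j))"
  unfolding rbf_def axis_def by (simp add: if_distrib cong: if_cong)

lemma real_nondeg:
  fixes G :: "int^'n^'n"
  assumes sym: "\<forall>i j. G$i$j = G$j$i" and nd: "nondegenerate G"
    and v: "\<forall>u. rbf G v u = 0"
  shows "v = 0"
proof (rule ccontr)
  assume v0: "v \<noteq> 0"
  define Gr :: "real^'n^'n" where "Gr = (\<chi> i j. of_int (G$i$j))"
  have "Gr *v v = 0"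
  proof -
    have "(Gr *v v)$j = 0" for j
    proof -
      have "(Gr *v v)$j = (\<Sum>i\<in>UNIV. v$i * of_int (G$i$j))"
        unfolding Gr_def matrix_vector_mult_def using sym by (simp add: mult.commute)
      also have "\<dots> = 0" using v rbf_axis[of G v j] by simp
      finally show ?thesis .
    qed
    then show ?thesis by (simp add: vec_eq_iff)
  qed
  then have "\<not> inj ((*v) Gr)" using v0 by (metis injD matrix_vector_mult_0_right)
  then have "det Gr = 0" using det_nz_iff_inj_gen[OF matrix_vector_mul_linear_gen, of Gr] by simp
  then have dG: "det G = 0" unfolding Gr_def det_of_int_mat by simp
  define Gq :: "rat^'n^'n" where "Gq = (\<chi> i j. of_int (G$i$j))"
  have "det Gq = 0" unfolding Gq_def det_of_int_mat dG by simp
  then have "\<not> inj ((*v) Gq)" using det_nz_iff_inj_gen[OF matrix_vector_mul_linear_gen, of Gq] by simp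
  then obtain q1 q2 where q: "q1 \<noteq> q2" "Gq *v q1 = Gq *v q2" unfolding inj_def by blast
  define q where "q = q1 - q2"
  have q0: "q \<noteq> 0" using q unfolding q_def by simp
  have Gqq: "Gq *v q = 0" using q unfolding q_def by (simp add: matrix_vector_mult_diff_distrib)
  obtain d where d: "d > 0" "\<forall>i\<in>UNIV. of_int d * q$i \<in> \<int>"
    using common_denom[of UNIV "\<lambda>i. q$i"] by auto
  define z :: "int^'n" where "z = (\<chi> i. SOME k. of_int k = of_int d * q$i)"
  have zq: "of_int (z$i) = of_int d * q$i" for i
  proof -
    obtain k where "of_int d * q$i = of_int k" using d(2) Ints_cases by blast
    then have "of_int (SOME k. of_int k = of_int d * q$i) = of_int d * q$i"
      by (metis (mono_tags, lifting) someI)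
    then show ?thesis unfolding z_def by simp
  qed
  have "bf G z y = 0" for y
  proof -
    have "(of_int (bf G z y) :: rat) = (\<Sum>j\<in>UNIV. (\<Sum>i\<in>UNIV. of_int (z$i) * of_int (G$i$j)) * of_int (y$j))"
      unfolding bf_def by (simp add: of_int_sum sum_distrib_right, subst sum.swap, simp)
    also have "\<dots> = (\<Sum>j\<in>UNIV. of_int d * (Gq *v q)$j * of_int (y$j))"
      unfolding zq Gq_def matrix_vector_mult_def using sym
      by (simp add: sum_distrib_left algebra_simps)
    also have "\<dots> = 0" using Gqq by simp
    finally show ?thesis by simp
  qed
  then have "z = 0" using nd unfolding nondegenerate_def by blast
  then have "q = 0" using zq d(1) by (simp add: vec_eq_iff)
  then show False using q0 by simp
qed



lemma polarized_sym: "polarized G h \<Longrightarrow> \<forall>i j. G$i$j = G$j$i"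
  by (simp add: polarized_def even_lattice_def)

lemma real_semidef:
  fixes G :: "int^'n^'n"
  assumes pol: "polarized G h" and w: "rbf G w (rvec h) = 0"
  shows "rbf G w w \<le> 0"
proof (rule ccontr)
  assume "\<not> ?thesis"
  then have ww: "rbf G w w > 0" by simp
  have sym: "\<forall>i j. G$i$j = G$j$i" using pol polarized_sym by blast
  have hh: "rbf G (rvec h) (rvec h) > 0" using pol by (simp add: rbf_rvec polarized_def)
  have hw: "rbf G (rvec h) w = 0" using w rbf_sym[OF sym] by metis
  define V where "V = span {rvec h, w}"
  have rep: "\<exists>a b. u = a *\<^sub>R rvec h + b *\<^sub>R w" if "u \<in> V" for u
  proof -
    from that obtain a where "u - a *\<^sub>R rvec h \<in> span {w}" unfolding V_def span_insert by blast
    then obtain b where "u - a *\<^sub>R rvec h = b *\<^sub>R w" unfolding span_singleton by blast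
    then show ?thesis by (metis add_diff_cancel_left' diff_add_cancel)
  qed
  have "posdef_subspace G V"
    unfolding posdef_subspace_def
  proof (intro conjI ballI impI)
    show "subspace V" unfolding V_def by simp
    fix u assume "u \<in> V" "u \<noteq> 0"
    then obtain a b where u: "u = a *\<^sub>R rvec h + b *\<^sub>R w" using rep by blast
    have "rbf G u u = a*a * rbf G (rvec h) (rvec h) + b * b * rbf G w w"
      unfolding u using hw w by (simp add: rbf_simps algebra_simps)
    moreover have "a \<noteq> 0 \<or> b \<noteq> 0" using \<open>u \<noteq> 0\<close> u by auto
    ultimately show "rbf G u u > 0" using hh ww
      by (metis add_pos_nonneg add_nonneg_pos mult_nonneg_nonneg mult_pos_pos not_real_square_gt_zero
          less_eq_real_def zero_le_square)
  qed
  moreover have "dim V = 2"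
  proof -
    have w0: "w \<noteq> 0" using ww by auto
    have "rvec h \<notin> span {w}"
    proof
      assume "rvec h \<in> span {w}"
      then obtain k where "rvec h = k *\<^sub>R w" unfolding span_singleton by blast
      then have "rbf G (rvec h) (rvec h) = k * rbf G w (rvec h)" by (simp add: rbf_simps)
      then show False using w hh by simp
    qed
    then have ind: "independent {rvec h, w}" using w0
      by (simp add: independent_insert)
    have "rvec h \<noteq> w" using hh w by auto
    then show ?thesis unfolding V_def dim_span_eq_card_independent[OF ind] by simp
  qed
  ultimately show False using pol unfolding polarized_def hyperbolic_def by fastforce
qed

lemma real_negdef:
  fixes G :: "int^'n^'n"
  assumes pol: "polarized G h" and v: "rbf G v (rvec h) = 0" and v0: "v \<noteq> 0"
  shows "rbf G v v < 0"
proof (rule ccontr)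
  assume "\<not> ?thesis"
  then have vv: "rbf G v v = 0" using real_semidef[OF pol v] by simp
  have sym: "\<forall>i j. G$i$j = G$j$i" using pol polarized_sym by blast
  have hh: "rbf G (rvec h) (rvec h) > 0" using pol by (simp add: rbf_rvec polarized_def)
  have perp: "rbf G v w = 0" if w: "rbf G w (rvec h) = 0" for w
  proof (rule ccontr)
    assume vw: "rbf G v w \<noteq> 0"
    define t where "t = rbf G v w / (\<bar>rbf G w w\<bar> + 1)"
    have "rbf G (v + t *\<^sub>R w) (rvec h) = 0" using v w by (simp add: rbf_simps)
    then have le: "rbf G (v + t *\<^sub>R w) (v + t *\<^sub>R w) \<le> 0" using real_semidef[OF pol] by blast
    have "rbf G (v + t *\<^sub>R w) (v + t *\<^sub>R w) = 2 * t * rbf G v w + t * t * rbf G w w"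
      using vv rbf_sym[OF sym, of w v] by (simp add: rbf_simps algebra_simps)
    also have "\<dots> = t * rbf G v w * (2 + rbf G w w / (\<bar>rbf G w w\<bar> + 1))"
    proof -
      have D: "\<bar>rbf G w w\<bar> + 1 \<noteq> 0" by linarith
      show ?thesis unfolding t_def using D by (simp add: divide_simps) (simp add: algebra_simps)
    qed
    also have "\<dots> > 0"
    proof -
      have "t * rbf G v w > 0" unfolding t_def using vw
        by (simp add: abs_add_one_gt_zero zero_less_mult_iff zero_less_divide_iff) (smt (verit))
      moreover have "rbf G w w / (\<bar>rbf G w w\<bar> + 1) > -1"
        by (simp add: field_simps)
      ultimately show ?thesis by (metis mult_pos_pos add.commute diff_gt_0_iff_gt diff_minus_eq_add less_trans one_less_numeral_iff semiring_norm(76) zero_less_one) 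
    qed
    finally show False using le by simp
  qed
  have "\<forall>u. rbf G v u = 0"
  proof
    fix u
    define t where "t = rbf G u (rvec h) / rbf G (rvec h) (rvec h)"
    have "rbf G (u - t *\<^sub>R rvec h) (rvec h) = 0" unfolding t_def using hh by (simp add: rbf_simps)
    then have "rbf G v (u - t *\<^sub>R rvec h) = 0" by (rule perp)
    moreover have "rbf G v (rvec h) = 0" by (fact v)
    ultimately show "rbf G v u = 0" by (simp add: rbf_simps)
  qed
  then have "v = 0" using real_nondeg[OF sym] pol unfolding polarized_def hyperbolic_def by blast
  then show False using v0 by simp
qed



lemma int_negdef:
  fixes G :: "int^'n^'n"
  assumes pol: "polarized G h" and "bf G x h = 0" and "bf G x x \<ge> 0"
  shows "x = 0"
proof (rule ccontr)
  assume "x \<noteq> 0"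
  then have "rvec x \<noteq> 0" by (simp add: rvec_eq0)
  moreover have "rbf G (rvec x) (rvec h) = 0" using assms by (simp add: rbf_rvec)
  ultimately have "rbf G (rvec x) (rvec x) < 0" using real_negdef[OF pol] by blast
  then show False using assms by (simp add: rbf_rvec)
qed

lemma finite_bounded_int_vec: "finite {x::int^'n. \<forall>i. \<bar>x$i\<bar> \<le> B}"
proof -
  have "{x::int^'n. \<forall>i. \<bar>x$i\<bar> \<le> B} \<subseteq> vec_lambda ` (PiE UNIV (\<lambda>_. {-B..B}))"
  proof
    fix x :: "int^'n" assume "x \<in> {x. \<forall>i. \<bar>x$i\<bar> \<le> B}"
    then have "(\<lambda>i. x$i) \<in> PiE UNIV (\<lambda>_. {-B..B})" by (auto simp: abs_le_iff) (metis minus_le_iff)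
    moreover have "x = vec_lambda (\<lambda>i. x$i)" by simp
    ultimately show "x \<in> vec_lambda ` (PiE UNIV (\<lambda>_. {-B..B}))" by blast
  qed
  moreover have "finite (vec_lambda ` (PiE UNIV (\<lambda>_. {-B..B})) :: (int^'n) set)"
    by (intro finite_imageI finite_PiE) auto
  ultimately show ?thesis by (rule finite_subset)
qed

lemma finite_root0:
  fixes G :: "int^'n^'n"
  assumes pol: "polarized G h"
  shows "finite (root_n G h 0)"
proof (cases "root_n G h 0 = {}")
  case True then show ?thesis by simp
next
  case False
  define K where "K = {v. rbf G v (rvec h) = 0 \<and> norm v = 1}"
  have unit: "inverse (norm (rvec r)) *\<^sub>R rvec r \<in> K" "rvec r \<noteq> 0" if "r \<in> root_n G h 0" for r
  proof -
    have "r \<noteq> 0" using that by (auto simp: root_n_def)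
    then show "rvec r \<noteq> 0" by (simp add: rvec_eq0)
    then show "inverse (norm (rvec r)) *\<^sub>R rvec r \<in> K"
      using that by (simp add: K_def rbf_simps rbf_rvec root_n_def)
  qed
  then have Kne: "K \<noteq> {}" using False by blast
  have "compact K"
  unfolding compact_eq_bounded_closed
  proof
    show "bounded K" unfolding K_def bounded_iff by auto
    show "closed K" unfolding K_def
      by (intro closed_Collect_conj closed_Collect_eq continuous_intros rbf_cont)
  qed
  then obtain v0 where v0: "v0 \<in> K" "\<forall>y\<in>K. rbf G y y \<le> rbf G v0 v0"
    using continuous_attains_sup[OF _ Kne rbf_cont2] by blast
  define c where "c = - rbf G v0 v0"
  have "v0 \<noteq> 0" using v0 by (auto simp: K_def)
  then have c: "c > 0" using v0 real_negdef[OF pol, of v0] by (auto simp: K_def c_def)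
  define B where "B = ceiling (1 + 2 / c)"
  have "root_n G h 0 \<subseteq> {x. \<forall>i. \<bar>x$i\<bar> \<le> B}"
  proof (intro subsetI CollectI allI)
    fix r i assume r: "r \<in> root_n G h 0"
    define u where "u = rvec r"
    have u0: "norm u > 0" using unit(2)[OF r] by (simp add: u_def)
    have le: "rbf G (inverse (norm u) *\<^sub>R u) (inverse (norm u) *\<^sub>R u) \<le> - c"
      using v0(2) unit(1)[OF r] by (simp add: c_def u_def)
    have uu: "rbf G u u = -2" using r by (simp add: u_def rbf_rvec root_n_def)
    have "rbf G (inverse (norm u) *\<^sub>R u) (inverse (norm u) *\<^sub>R u) = inverse (norm u) * inverse (norm u) * rbf G u u"
      by (simp add: rbf_simps)
    with le uu have "c \<le> 2 * (inverse (norm u) * inverse (norm u))" by simp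
    then have "c * (norm u * norm u) \<le> 2 * (inverse (norm u) * inverse (norm u)) * (norm u * norm u)"
      using u0 by (intro mult_right_mono) auto
    also have "\<dots> = 2" using u0 by (simp add: field_simps)
    finally have "c * (norm u)^2 \<le> 2" by (simp add: power2_eq_square)
    then have nu: "(norm u)^2 \<le> 2 / c" using c by (simp add: pos_le_divide_eq mult.commute)
    have "\<bar>u$i\<bar> \<le> norm u" by (rule component_le_norm_cart)
    also have "norm u \<le> 1 + (norm u)^2"
    proof (cases "norm u \<le> 1")
      case True then show ?thesis by (simp add: add_increasing2)
    next
      case False then have "norm u * 1 \<le> norm u * norm u" by (intro mult_left_mono) auto
      then show ?thesis by (simp add: power2_eq_square)
    qed
    also have "\<dots> \<le> 1 + 2 / c" using nu by simp
    also have "\<dots> \<le> B" unfolding B_def by simp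
    finally have "\<bar>u$i\<bar> \<le> of_int B" .
    then show "\<bar>r$i\<bar> \<le> B" unfolding u_def rvec_def by simp
  qed
  then show ?thesis using finite_bounded_int_vec finite_subset by blast
qed



definition chP :: "int^'n^'n \<Rightarrow> int^'n \<Rightarrow> real^'n \<Rightarrow> (int^'n) set" where
  "chP G h x = {r \<in> root_n G h 0. rbf G (rvec r) x > 0}"

definition generic :: "int^'n^'n \<Rightarrow> int^'n \<Rightarrow> real^'n \<Rightarrow> bool" where
  "generic G h x \<longleftrightarrow> x \<in> span (rvec ` root_n G h 0) \<and> (\<forall>r\<in>root_n G h 0. rbf G (rvec r) x \<noteq> 0)"

lemma pos_lemma:
  assumes fin: "finite P" and Ppos: "\<forall>r\<in>P. rbf G (rvec r) x > 0"
    and simp_nn: "\<forall>e\<in>simple_roots P. bf G l e \<ge> 0" and r: "r \<in> P"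
  shows "bf G l r \<ge> 0"
proof -
  have "\<forall>r. card {s\<in>P. rbf G (rvec s) x < rbf G (rvec r) x} = n \<longrightarrow> r \<in> P \<longrightarrow> bf G l r \<ge> 0" for n
  proof (induction n rule: less_induct)
    case (less n)
    show ?case
    proof (intro allI impI)
      fix r assume n: "card {s\<in>P. rbf G (rvec s) x < rbf G (rvec r) x} = n" and r: "r \<in> P"
      show "bf G l r \<ge> 0"
      proof (cases "r \<in> simple_roots P")
        case True then show ?thesis using simp_nn by blast
      next
        case False
        then obtain a b where ab: "a \<in> P" "b \<in> P" "r = a + b" using r unfolding simple_roots_def by blast
        have rx: "rbf G (rvec r) x = rbf G (rvec a) x + rbf G (rvec b) x"
          using ab by (simp add: rvec_add rbf_simps)
        have small: "card {s\<in>P. rbf G (rvec s) x < rbf G (rvec c) x} < n"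
          if c: "c \<in> P" "rbf G (rvec c) x < rbf G (rvec r) x" for c
        proof -
          have "{s\<in>P. rbf G (rvec s) x < rbf G (rvec c) x} \<subset> {s\<in>P. rbf G (rvec s) x < rbf G (rvec r) x}"
            using c by auto
          then show ?thesis using n fin by (metis (no_types, lifting) finite_subset mem_Collect_eq psubset_card_mono subsetI)
        qed
        have "bf G l a \<ge> 0" using less.IH[OF small[of a]] ab Ppos rx by auto
        moreover have "bf G l b \<ge> 0" using less.IH[OF small[of b]] ab Ppos rx by auto
        ultimately show ?thesis using ab by (simp add: bf_simps)
      qed
    qed
  qed
  then show ?thesis using r by blast
qed

lemma small_eps:
  assumes "finite T"
  shows "\<exists>\<epsilon>::real>0. \<forall>t\<in>T. f t \<noteq> 0 \<longrightarrow> \<epsilon> * \<bar>g t\<bar> < \<bar>f t\<bar>"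
  using assms
proof (induction T rule: finite_induct)
  case empty then show ?case by (intro exI[of _ 1]) simp
next
  case (insert a T)
  then obtain e1 where e1: "e1 > 0" "\<forall>t\<in>T. f t \<noteq> 0 \<longrightarrow> e1 * \<bar>g t\<bar> < \<bar>f t\<bar>" by blast
  show ?case
  proof (cases "f a = 0")
    case True then show ?thesis using e1 by auto
  next
    case False
    define e where "e = min e1 (\<bar>f a\<bar> / (\<bar>g a\<bar> + 1))"
    have e0: "e > 0" using e1 False unfolding e_def by (simp add: abs_add_one_gt_zero)
    have "e * \<bar>g a\<bar> < \<bar>f a\<bar>"
    proof -
      have "e * \<bar>g a\<bar> \<le> \<bar>f a\<bar> / (\<bar>g a\<bar> + 1) * \<bar>g a\<bar>" unfolding e_def by (intro mult_right_mono) auto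
      also have "\<dots> < \<bar>f a\<bar>" using False by (simp add: field_simps abs_add_one_gt_zero)
      finally show ?thesis .
    qed
    moreover have "\<forall>t\<in>T. f t \<noteq> 0 \<longrightarrow> e * \<bar>g t\<bar> < \<bar>f t\<bar>"
    proof (intro ballI impI)
      fix t assume "t \<in> T" "f t \<noteq> 0"
      have "e * \<bar>g t\<bar> \<le> e1 * \<bar>g t\<bar>" unfolding e_def by (intro mult_right_mono) auto
      then show "e * \<bar>g t\<bar> < \<bar>f t\<bar>" using e1 \<open>t \<in> T\<close> \<open>f t \<noteq> 0\<close> by fastforce
    qed
    ultimately show ?thesis using e0 by auto
  qed
qed

lemma perturb:
  fixes G :: "int^'n^'n"
  assumes "finite R" "\<forall>r\<in>R. bf G r r = -2"
  shows "finite S \<Longrightarrow> \<exists>x'. x' - x \<in> span (rvec ` R) \<and> (\<forall>r\<in>R. rbf G (rvec r) x' \<noteq> 0)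
     \<and> (\<forall>s\<in>S. (rbf G s x > 0 \<longrightarrow> rbf G s x' > 0) \<and> (rbf G s x < 0 \<longrightarrow> rbf G s x' < 0))"
  using assms
proof (induction R arbitrary: S rule: finite_induct)
  case empty then show ?case by (intro exI[of _ x]) simp
next
  case (insert a R)
  have finS': "finite (insert (rvec a) S)" using insert by simp
  obtain x1 where x1: "x1 - x \<in> span (rvec ` R)" "\<forall>r\<in>R. rbf G (rvec r) x1 \<noteq> 0"
    "\<forall>s\<in>insert (rvec a) S. (rbf G s x > 0 \<longrightarrow> rbf G s x1 > 0) \<and> (rbf G s x < 0 \<longrightarrow> rbf G s x1 < 0)"
    using insert.IH[OF finS'] insert.prems by auto
  have spanmono: "span (rvec ` R) \<subseteq> span (rvec ` insert a R)" by (intro span_mono) auto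
  show ?case
  proof (cases "rbf G (rvec a) x1 = 0")
    case False
    then show ?thesis using x1 spanmono by (intro exI[of _ x1]) auto
  next
    case True
    define T where "T = S \<union> rvec ` R"
    have "finite T" using insert unfolding T_def by simp
    then obtain e where e: "e > 0" "\<forall>t\<in>T. rbf G t x1 \<noteq> 0 \<longrightarrow> e * \<bar>rbf G t (rvec a)\<bar> < \<bar>rbf G t x1\<bar>"
      using small_eps[of T "\<lambda>t. rbf G t x1" "\<lambda>t. rbf G t (rvec a)"] by blast
    define x2 where "x2 = x1 + e *\<^sub>R rvec a"
    have x2t: "rbf G t x2 = rbf G t x1 + e * rbf G t (rvec a)" for t
      unfolding x2_def by (simp add: rbf_simps)
    have keep: "(rbf G t x1 > 0 \<longrightarrow> rbf G t x2 > 0) \<and> (rbf G t x1 < 0 \<longrightarrow> rbf G t x2 < 0)" if "t \<in> T" for t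
    proof -
      have "rbf G t x1 \<noteq> 0 \<longrightarrow> \<bar>e * rbf G t (rvec a)\<bar> < \<bar>rbf G t x1\<bar>"
        using e that by (simp add: abs_mult)
      then show ?thesis unfolding x2t by (auto simp: abs_if split: if_splits)
    qed
    show ?thesis
    proof (intro exI[of _ x2] conjI ballI)
      have "x2 - x = (x1 - x) + e *\<^sub>R rvec a" unfolding x2_def by simp
      moreover have "e *\<^sub>R rvec a \<in> span (rvec ` insert a R)" by (intro span_mul span_base) auto
      ultimately show "x2 - x \<in> span (rvec ` insert a R)" using x1(1) spanmono by (metis span_add subsetD)
    next
      fix r assume "r \<in> insert a R"
      then show "rbf G (rvec r) x2 \<noteq> 0"
      proof
        assume "r = a"
        then show ?thesis using True e insert.prems by (simp add: x2t rbf_rvec)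
      next
        assume "r \<in> R"
        then have "rvec r \<in> T" unfolding T_def by blast
        have "rbf G (rvec r) x1 \<noteq> 0" using x1(2) \<open>r \<in> R\<close> by blast
        then show ?thesis using keep[OF \<open>rvec r \<in> T\<close>] by linarith
      qed
    next
      fix s assume "s \<in> S"
      then show "rbf G s x > 0 \<longrightarrow> rbf G s x2 > 0"
        using keep[of s] x1(3) unfolding T_def by auto
    next
      fix s assume "s \<in> S"
      then show "rbf G s x < 0 \<longrightarrow> rbf G s x2 < 0"
        using keep[of s] x1(3) unfolding T_def by auto
    qed
  qed
qed



definition refl :: "int^'n^'n \<Rightarrow> int^'n \<Rightarrow> int^'n \<Rightarrow> int^'n" where
  "refl G e r = r + bf G r e *s e"

context
  fixes G :: "int^'n^'n" and h :: "int^'n"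
  assumes pol: "polarized G h"
begin

lemma psym: "bf G x y = bf G y x"
  using pol polarized_sym bf_sym by blast

lemma root0_iff: "r \<in> root_n G h 0 \<longleftrightarrow> bf G r r = -2 \<and> bf G r h = 0"
  by (simp add: root_n_def)

lemma root0_neg: "r \<in> root_n G h 0 \<Longrightarrow> - r \<in> root_n G h 0"
  by (simp add: root_n_def bf_simps)

lemma root0_nz: "r \<in> root_n G h 0 \<Longrightarrow> r \<noteq> 0"
  by (auto simp: root_n_def)

lemma root0_neq_neg: "r \<in> root_n G h 0 \<Longrightarrow> r \<noteq> - r"
proof
  assume "r \<in> root_n G h 0" "r = - r"
  then have "\<forall>i. r$i = 0" by (metis equal_neg_zero vector_uminus_component)
  then have "r = 0" by (simp add: vec_eq_iff)
  then show False using root0_nz \<open>r \<in> root_n G h 0\<close> by blast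
qed

lemma refl_root: "e \<in> root_n G h 0 \<Longrightarrow> r \<in> root_n G h 0 \<Longrightarrow> refl G e r \<in> root_n G h 0"
  unfolding refl_def root0_iff using psym[of e r]
  by (simp add: bf_simps algebra_simps)

lemma refl_refl: "e \<in> root_n G h 0 \<Longrightarrow> refl G e (refl G e r) = r"
proof -
  assume e: "e \<in> root_n G h 0"
  have "bf G (refl G e r) e = - bf G r e" using e unfolding refl_def root0_iff by (simp add: bf_simps)
  then show ?thesis unfolding refl_def by (simp add: vec_eq_iff algebra_simps)
qed

lemma refl_self: "e \<in> root_n G h 0 \<Longrightarrow> refl G e e = - e"
  unfolding refl_def root0_iff by (simp add: vec_eq_iff)

lemma refl_negself: "e \<in> root_n G h 0 \<Longrightarrow> refl G e (- e) = e"
  unfolding refl_def root0_iff by (simp add: vec_eq_iff bf_simps)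

lemma refl_rbf: "rbf G (rvec r) (x + rbf G (rvec e) x *\<^sub>R rvec e) = rbf G (rvec (refl G e r)) x"
  unfolding refl_def by (simp add: rbf_simps rvec_add rvec_smult rbf_rvec)

lemma chP_sub: "chP G h x \<subseteq> root_n G h 0"
  by (auto simp: chP_def)

lemma chP_fin: "finite (chP G h x)"
  using finite_root0[OF pol] chP_sub finite_subset by blast

lemma rbf_rvec_neg: "rbf G (rvec (- r)) x = - rbf G (rvec r) x"
  by (simp add: rvec_neg rbf_simps)

lemma chP_dich: "generic G h x \<Longrightarrow> r \<in> root_n G h 0 \<Longrightarrow> r \<in> chP G h x \<or> - r \<in> chP G h x"
  unfolding generic_def chP_def using root0_neg rbf_rvec_neg
  by (metis (mono_tags, lifting) mem_Collect_eq neg_0_less_iff_less linorder_neqE_linordered_idom)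

lemma chP_notboth: "r \<in> chP G h x \<Longrightarrow> - r \<notin> chP G h x"
  unfolding chP_def using rbf_rvec_neg by (simp)

lemma key_lemma:
  assumes gen: "generic G h x" and e: "e \<in> simple_roots (chP G h x)"
    and r: "r \<in> chP G h x" and re: "r \<noteq> e"
  shows "refl G e r \<in> chP G h x"
proof -
  have eP: "e \<in> chP G h x" using e by (simp add: simple_roots_def)
  then have eR: "e \<in> root_n G h 0" and ex: "rbf G (rvec e) x > 0" by (auto simp: chP_def)
  have rR: "r \<in> root_n G h 0" and rx: "rbf G (rvec r) x > 0" using r by (auto simp: chP_def)
  define k where "k = bf G r e"
  have sR: "refl G e r \<in> root_n G h 0" using refl_root eR rR by blast
  have sx: "rbf G (rvec (refl G e r)) x = rbf G (rvec r) x + of_int k * rbf G (rvec e) x"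
    unfolding refl_def k_def by (simp add: rvec_add rvec_smult rbf_simps)
  show ?thesis
  proof (cases "k \<ge> 0")
    case True
    then have "rbf G (rvec (refl G e r)) x > 0" unfolding sx using rx ex
      by (simp add: add_pos_nonneg)
    then show ?thesis using sR by (simp add: chP_def)
  next
    case False
    have "k \<ge> -1"
    proof (rule ccontr)
      assume "\<not> k \<ge> -1"
      then have "bf G (r - e) (r - e) \<ge> 0" using rR eR psym[of e r]
        unfolding k_def root0_iff by (simp add: bf_simps)
      moreover have "bf G (r - e) h = 0" using rR eR unfolding root0_iff by (simp add: bf_simps)
      ultimately have "r - e = 0" using int_negdef[OF pol] by blast
      then show False using re by simp
    qed
    then have k1: "k = -1" using False by simp
    then have sre: "refl G e r = r - e" unfolding refl_def k_def by (simp add: vec_eq_iff)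
    show ?thesis
    proof (rule ccontr)
      assume "refl G e r \<notin> chP G h x"
      then have "- (r - e) \<in> chP G h x" using chP_dich[OF gen sR] sre by simp
      then have "e - r \<in> chP G h x" by simp
      moreover have "e = r + (e - r)" by simp
      ultimately show False using e r unfolding simple_roots_def by blast
    qed
  qed
qed

end



context
  fixes G :: "int^'n^'n" and h :: "int^'n" and \<Gamma> :: "(int^'n) set"
  assumes pol: "polarized G h" and nosep: "\<forall>r. \<not> separating G h \<Gamma> r"
begin

definition NS :: "real^'n \<Rightarrow> (int^'n) set" where
  "NS x = {r \<in> chP G h x. \<exists>l\<in>\<Gamma>. bf G l r < 0}"

lemma descent_step:
  assumes gen: "generic G h x" and e: "e \<in> simple_roots (chP G h x)"
    and l0: "l0 \<in> \<Gamma>" "bf G l0 e < 0"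
  defines "x2 \<equiv> x + rbf G (rvec e) x *\<^sub>R rvec e"
  shows "generic G h x2"
    and "\<forall>r. (r \<in> chP G h x2 \<and> (\<forall>l\<in>\<Gamma>. bf G l r = 0)) \<longleftrightarrow> (r \<in> chP G h x \<and> (\<forall>l\<in>\<Gamma>. bf G l r = 0))"
    and "card (NS x2) < card (NS x)"
proof -
  have eP: "e \<in> chP G h x" using e by (simp add: simple_roots_def)
  then have eR: "e \<in> root_n G h 0" and ex: "rbf G (rvec e) x > 0" by (auto simp: chP_def)
  have x2r: "rbf G (rvec r) x2 = rbf G (rvec (refl G e r)) x" for r
    unfolding x2_def by (rule refl_rbf[OF pol])
  have ch2: "chP G h x2 = {r \<in> root_n G h 0. refl G e r \<in> chP G h x}"
    unfolding chP_def x2r using refl_root[OF pol eR] by auto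
  show gen2: "generic G h x2"
    unfolding generic_def
  proof (intro conjI ballI)
    have "rvec e \<in> span (rvec ` root_n G h 0)" using eR by (intro span_base) auto
    then show "x2 \<in> span (rvec ` root_n G h 0)" unfolding x2_def using gen
      by (auto simp: generic_def intro!: span_add span_mul)
    fix r assume "r \<in> root_n G h 0"
    then show "rbf G (rvec r) x2 \<noteq> 0" unfolding x2r using gen refl_root[OF pol eR] by (auto simp: generic_def)
  qed
  have nme: "- e \<notin> chP G h x" using chP_notboth[OF pol eP] .
  have char: "r \<in> chP G h x2 \<longleftrightarrow> (r \<in> chP G h x \<and> r \<noteq> e) \<or> r = - e" if rR: "r \<in> root_n G h 0" for r
  proof -
    consider "r = e" | "r = - e" | "r \<noteq> e" "r \<noteq> - e" by blast
    then show ?thesis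
    proof cases
      case 1 then show ?thesis using ch2 refl_self[OF pol eR] nme root0_neq_neg[OF pol eR] by auto
    next
      case 2 then show ?thesis using ch2 refl_negself[OF pol eR] eP rR by auto
    next
      case 3
      have "refl G e r \<in> chP G h x \<longleftrightarrow> r \<in> chP G h x"
      proof
        assume s: "refl G e r \<in> chP G h x"
        have "refl G e r \<noteq> e" using 3 refl_refl[OF pol eR, of r] refl_self[OF pol eR] by metis
        then have "refl G e (refl G e r) \<in> chP G h x" using key_lemma[OF pol gen e s] by blast
        then show "r \<in> chP G h x" using refl_refl[OF pol eR] by simp
      next
        assume "r \<in> chP G h x"
        then show "refl G e r \<in> chP G h x" using key_lemma[OF pol gen e] 3 by blast
      qed
      then show ?thesis using ch2 rR 3 by auto
    qed
  qed
  have nege: "bf G l0 (- e) \<noteq> 0" using l0 by (simp add: bf_simps)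
  show "\<forall>r. (r \<in> chP G h x2 \<and> (\<forall>l\<in>\<Gamma>. bf G l r = 0)) \<longleftrightarrow> (r \<in> chP G h x \<and> (\<forall>l\<in>\<Gamma>. bf G l r = 0))"
  proof (intro allI iffI)
    fix r assume a: "r \<in> chP G h x2 \<and> (\<forall>l\<in>\<Gamma>. bf G l r = 0)"
    then have "r \<noteq> e" "r \<noteq> - e" using l0 nege by auto
    then show "r \<in> chP G h x \<and> (\<forall>l\<in>\<Gamma>. bf G l r = 0)" using a char chP_sub[OF pol] by blast
  next
    fix r assume a: "r \<in> chP G h x \<and> (\<forall>l\<in>\<Gamma>. bf G l r = 0)"
    then have "r \<noteq> e" "r \<noteq> - e" using l0 nege by auto
    then show "r \<in> chP G h x2 \<and> (\<forall>l\<in>\<Gamma>. bf G l r = 0)" using a char chP_sub[OF pol] by blast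
  qed
  have "- e \<notin> NS x2"
  proof
    assume "- e \<in> NS x2"
    then obtain l where l: "l \<in> \<Gamma>" "bf G l (- e) < 0" unfolding NS_def by blast
    then have "bf G e l > 0" using psym[OF pol, of l e] by (simp add: bf_simps)
    moreover have "bf G e l0 < 0" using l0 psym[OF pol, of l0 e] by simp
    ultimately have "separating G h \<Gamma> e" unfolding separating_def using eR l l0 by blast
    then show False using nosep by blast
  qed
  have "NS x2 = NS x - {e}"
  proof (rule set_eqI)
    fix r
    show "r \<in> NS x2 \<longleftrightarrow> r \<in> NS x - {e}"
    proof
      assume a: "r \<in> NS x2"
      then have r2: "r \<in> chP G h x2" and rR: "r \<in> root_n G h 0" unfolding NS_def using chP_sub[OF pol] by auto
      have "r \<noteq> - e" using a \<open>- e \<notin> NS x2\<close> by auto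
      then have "r \<in> chP G h x \<and> r \<noteq> e" using char[OF rR] r2 by simp
      then show "r \<in> NS x - {e}" using a unfolding NS_def by simp
    next
      assume a: "r \<in> NS x - {e}"
      then have r1: "r \<in> chP G h x" "r \<noteq> e" and rR: "r \<in> root_n G h 0" unfolding NS_def using chP_sub[OF pol] by auto
      then have "r \<in> chP G h x2" using char[OF rR] by simp
      then show "r \<in> NS x2" using a unfolding NS_def by simp
    qed
  qed
  moreover have "e \<in> NS x" unfolding NS_def using eP l0 by blast
  moreover have "finite (NS x)" unfolding NS_def using chP_fin[OF pol] by simp
  ultimately show "card (NS x2) < card (NS x)" by (metis card_Diff1_less)
qed

lemma descent:
  assumes "generic G h x"
  shows "\<exists>x2. generic G h x2
     \<and> (\<forall>r. (r \<in> chP G h x2 \<and> (\<forall>l\<in>\<Gamma>. bf G l r = 0)) \<longleftrightarrow> (r \<in> chP G h x \<and> (\<forall>l\<in>\<Gamma>. bf G l r = 0)))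
     \<and> (\<forall>e\<in>simple_roots (chP G h x2). \<forall>l\<in>\<Gamma>. bf G l e \<ge> 0)"
proof -
  have "\<forall>x. generic G h x \<longrightarrow> card (NS x) = n \<longrightarrow> (\<exists>x2. generic G h x2
     \<and> (\<forall>r. (r \<in> chP G h x2 \<and> (\<forall>l\<in>\<Gamma>. bf G l r = 0)) \<longleftrightarrow> (r \<in> chP G h x \<and> (\<forall>l\<in>\<Gamma>. bf G l r = 0)))
     \<and> (\<forall>e\<in>simple_roots (chP G h x2). \<forall>l\<in>\<Gamma>. bf G l e \<ge> 0))" for n
  proof (induction n rule: less_induct)
    case (less n)
    show ?case
    proof (intro allI impI)
      fix x assume gen: "generic G h x" and n: "card (NS x) = n"
      show "\<exists>x2. generic G h x2
     \<and> (\<forall>r. (r \<in> chP G h x2 \<and> (\<forall>l\<in>\<Gamma>. bf G l r = 0)) \<longleftrightarrow> (r \<in> chP G h x \<and> (\<forall>l\<in>\<Gamma>. bf G l r = 0)))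
     \<and> (\<forall>e\<in>simple_roots (chP G h x2). \<forall>l\<in>\<Gamma>. bf G l e \<ge> 0)"
      proof (cases "\<forall>e\<in>simple_roots (chP G h x). \<forall>l\<in>\<Gamma>. bf G l e \<ge> 0")
        case True then show ?thesis using gen by blast
      next
        case False
        then obtain e l0 where e: "e \<in> simple_roots (chP G h x)" "l0 \<in> \<Gamma>" "bf G l0 e < 0"
          by (meson not_le)
        define x2 where "x2 = x + rbf G (rvec e) x *\<^sub>R rvec e"
        note st = descent_step[OF gen e, folded x2_def]
        from less.IH[OF st(3)[unfolded n]] st(1) obtain x3 where x3: "generic G h x3"
          "\<forall>r. (r \<in> chP G h x3 \<and> (\<forall>l\<in>\<Gamma>. bf G l r = 0)) \<longleftrightarrow> (r \<in> chP G h x2 \<and> (\<forall>l\<in>\<Gamma>. bf G l r = 0))"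
          "\<forall>e\<in>simple_roots (chP G h x3). \<forall>l\<in>\<Gamma>. bf G l e \<ge> 0" by blast
        then show ?thesis using st(2) by blast
      qed
    qed
  qed
  then show ?thesis using assms by blast
qed

end



lemma zspan_sub:
  assumes "0 \<in> B" "\<forall>x\<in>B. \<forall>a\<in>A. x + a \<in> B \<and> x - a \<in> B"
  shows "zspan A \<subseteq> B"
proof
  fix x assume "x \<in> zspan A"
  then show "x \<in> B" by (induction rule: zspan.induct) (use assms in auto)
qed

lemma zspan_base: "a \<in> A \<Longrightarrow> a \<in> zspan A"
  using zspan_add[OF zspan_zero] by fastforce

lemma zspan_perp: "\<forall>a\<in>A. bf G a y = 0 \<Longrightarrow> x \<in> zspan A \<Longrightarrow> bf G x y = 0"
  using zspan_sub[of "{x. bf G x y = 0}" A] by (auto simp: bf_simps)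

lemma Phi_rt:
  assumes pol: "polarized G h"
  shows "lattice_roots G (zspan (lattice_roots G (rt G h))) = root_n G h 0"
proof -
  have z: "zspan (root_n G h 0) \<subseteq> {x. bf G x h = 0}"
    using zspan_perp[of "root_n G h 0" G h] by (auto simp: root_n_def)
  have lr: "lattice_roots G (zspan (root_n G h 0)) = root_n G h 0"
    unfolding lattice_roots_def using z zspan_base[of _ "root_n G h 0"] by (auto simp: root_n_def)
  show ?thesis unfolding rt_def lr lr ..
qed

lemma perp_iff: "r \<in> perp_lattice G (zspan (insert h \<Gamma>)) \<longleftrightarrow> bf G r h = 0 \<and> (\<forall>l\<in>\<Gamma>. bf G r l = 0)"
proof
  assume "r \<in> perp_lattice G (zspan (insert h \<Gamma>))"
  then show "bf G r h = 0 \<and> (\<forall>l\<in>\<Gamma>. bf G r l = 0)"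
    unfolding perp_lattice_def using zspan_base[of _ "insert h \<Gamma>"] by auto
next
  assume a: "bf G r h = 0 \<and> (\<forall>l\<in>\<Gamma>. bf G r l = 0)"
  have "zspan (insert h \<Gamma>) \<subseteq> {y. bf G r y = 0}"
    using a by (intro zspan_sub) (auto simp: bf_simps)
  then show "r \<in> perp_lattice G (zspan (insert h \<Gamma>))" unfolding perp_lattice_def by auto
qed

lemma Phi_L:
  assumes pol: "polarized G h"
  shows "lattice_roots G (zspan (lattice_roots G (perp_lattice G (zspan (insert h \<Gamma>)))))
    = {r \<in> root_n G h 0. \<forall>l\<in>\<Gamma>. bf G l r = 0}"
proof -
  define L where "L = perp_lattice G (zspan (insert h \<Gamma>))"
  have "zspan (lattice_roots G L) \<subseteq> L"
    unfolding L_def by (intro zspan_sub) (auto simp: perp_iff bf_simps lattice_roots_def)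
  then have "lattice_roots G (zspan (lattice_roots G L)) = lattice_roots G L"
    using zspan_base[of _ "lattice_roots G L"] unfolding lattice_roots_def by auto
  also have "\<dots> = {r \<in> root_n G h 0. \<forall>l\<in>\<Gamma>. bf G l r = 0}"
    unfolding lattice_roots_def L_def perp_iff root_n_def using psym[OF pol] by auto
  finally show ?thesis unfolding L_def .
qed

lemma wc_rt:
  assumes pol: "polarized G h"
  shows "weyl_chamber G (rt G h) P \<longleftrightarrow> (\<exists>x. generic G h x \<and> P = chP G h x)"
  unfolding weyl_chamber_def weyl_chamber_roots_def Phi_rt[OF pol] generic_def chP_def by blast



lemma compat_pos:
  assumes pol: "polarized G h" and gen: "generic G h x" and comp: "compatible G h (chP G h x) \<Gamma>"
    and l: "l \<in> \<Gamma>" and r: "r \<in> chP G h x"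
  shows "bf G l r \<ge> 0"
proof -
  have a: "\<forall>e\<in>simple_roots (chP G h x). bf G l e \<ge> 0" using comp l unfolding compatible_def Fn_def by blast
  have b: "\<forall>r\<in>chP G h x. rbf G (rvec r) x > 0" by (simp add: chP_def)
  show ?thesis using pos_lemma[OF chP_fin[OF pol] b a r] .
qed

lemma uniq_sub:
  assumes pol: "polarized G h"
    and g1: "generic G h x1" and c1: "compatible G h (chP G h x1) \<Gamma>"
    and g2: "generic G h x2" and c2: "compatible G h (chP G h x2) \<Gamma>"
    and f: "chP G h x1 \<inter> perp_lattice G (zspan (insert h \<Gamma>)) \<subseteq> chP G h x2"
  shows "chP G h x1 \<subseteq> chP G h x2"
proof
  fix r assume r: "r \<in> chP G h x1"
  then have rR: "r \<in> root_n G h 0" by (simp add: chP_def)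
  have nn: "\<forall>l\<in>\<Gamma>. bf G l r \<ge> 0" using compat_pos[OF pol g1 c1 _ r] by blast
  show "r \<in> chP G h x2"
  proof (cases "\<forall>l\<in>\<Gamma>. bf G l r = 0")
    case True
    then have "r \<in> perp_lattice G (zspan (insert h \<Gamma>))"
      unfolding perp_iff using rR psym[OF pol] by (auto simp: root_n_def)
    then show ?thesis using f r by blast
  next
    case False
    then obtain l where l: "l \<in> \<Gamma>" "bf G l r > 0" using nn by force
    show ?thesis
    proof (rule ccontr)
      assume "r \<notin> chP G h x2"
      then have "- r \<in> chP G h x2" using chP_dich[OF pol g2 rR] by blast
      then have "bf G l (- r) \<ge> 0" using compat_pos[OF pol g2 c2 l(1)] by blast
      then show False using l by (simp add: bf_simps)
    qed
  qed
qed



theorem lemma2p4: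
  fixes G :: "int^'n^'n" and h :: "int^'n" and \<Gamma> :: "(int^'n) set"
  assumes "polarized G h"
    and "\<Gamma> \<subseteq> root_n G h 1"
  shows "((\<exists>P. weyl_chamber G (rt G h) P \<and> compatible G h P \<Gamma>)
            \<longleftrightarrow> \<not> (\<exists>r. separating G h \<Gamma> r))
         \<and> (\<not> (\<exists>r. separating G h \<Gamma> r) \<longrightarrow>
             (\<forall>P'. weyl_chamber G (perp_lattice G (zspan (insert h \<Gamma>))) P' \<longrightarrow>
               (\<exists>!P. weyl_chamber G (rt G h) P \<and> compatible G h P \<Gamma>
                     \<and> is_face P P' (perp_lattice G (zspan (insert h \<Gamma>))))))"
proof -
  note pol = assms(1)
  define L where "L = perp_lattice G (zspan (insert h \<Gamma>))"
  define N where "N = {r \<in> root_n G h 0. \<forall>l\<in>\<Gamma>. bf G l r = 0}"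
  have finR: "finite (root_n G h 0)" using finite_root0[OF pol] .
  have rootsR: "\<forall>r\<in>root_n G h 0. bf G r r = -2" by (simp add: root_n_def)
  have compat_of: "compatible G h (chP G h x) \<Gamma>"
    if "\<forall>e\<in>simple_roots (chP G h x). \<forall>l\<in>\<Gamma>. bf G l e \<ge> 0" for x
    using that assms(2) unfolding compatible_def Fn_def by blast
  have LN: "r \<in> root_n G h 0 \<Longrightarrow> r \<in> L \<longleftrightarrow> (\<forall>l\<in>\<Gamma>. bf G l r = 0)" for r
    unfolding L_def perp_iff using psym[OF pol] by (auto simp: root_n_def)
  have part1: "(\<exists>P. weyl_chamber G (rt G h) P \<and> compatible G h P \<Gamma>) \<longleftrightarrow> \<not> (\<exists>r. separating G h \<Gamma> r)"
  proof
    assume "\<exists>P. weyl_chamber G (rt G h) P \<and> compatible G h P \<Gamma>"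
    then obtain x where gen: "generic G h x" and c: "compatible G h (chP G h x) \<Gamma>"
      unfolding wc_rt[OF pol] by blast
    show "\<not> (\<exists>r. separating G h \<Gamma> r)"
    proof
      assume "\<exists>r. separating G h \<Gamma> r"
      then obtain r u v where r: "r \<in> root_n G h 0" "u \<in> \<Gamma>" "v \<in> \<Gamma>" "bf G r u > 0" "bf G r v < 0"
        unfolding separating_def by blast
      consider "r \<in> chP G h x" | "- r \<in> chP G h x" using chP_dich[OF pol gen r(1)] by blast
      then show False
      proof cases
        case 1
        then have "bf G v r \<ge> 0" using compat_pos[OF pol gen c r(3)] by blast
        then show False using r(5) psym[OF pol, of v r] by simp
      next
        case 2
        then have "bf G u (- r) \<ge> 0" using compat_pos[OF pol gen c r(2)] by blast
        then show False using r(4) psym[OF pol, of u r] by (simp add: bf_simps)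
      qed
    qed
  next
    assume ns: "\<not> (\<exists>r. separating G h \<Gamma> r)"
    then have nosep: "\<forall>r. \<not> separating G h \<Gamma> r" by blast
    obtain x0 where x0: "x0 - 0 \<in> span (rvec ` root_n G h 0)" "\<forall>r\<in>root_n G h 0. rbf G (rvec r) x0 \<noteq> 0"
      using perturb[OF finR rootsR, of "{}" 0] by auto
    then have "generic G h x0" unfolding generic_def by simp
    from descent[OF pol nosep this] obtain x2 where
      "generic G h x2" "\<forall>e\<in>simple_roots (chP G h x2). \<forall>l\<in>\<Gamma>. bf G l e \<ge> 0" by blast
    then show "\<exists>P. weyl_chamber G (rt G h) P \<and> compatible G h P \<Gamma>"
      unfolding wc_rt[OF pol] using compat_of by blast
  qed
  have part2: "weyl_chamber G L P' \<longrightarrow>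
               (\<exists>!P. weyl_chamber G (rt G h) P \<and> compatible G h P \<Gamma> \<and> is_face P P' L)"
    if ns: "\<not> (\<exists>r. separating G h \<Gamma> r)" for P'
  proof
    assume wc: "weyl_chamber G L P'"
    have nosep: "\<forall>r. \<not> separating G h \<Gamma> r" using ns by blast
    obtain x' where x': "x' \<in> span (rvec ` N)" "\<forall>r\<in>N. rbf G (rvec r) x' \<noteq> 0"
      "P' = {r \<in> N. rbf G (rvec r) x' > 0}"
      using wc unfolding weyl_chamber_def L_def Phi_L[OF pol] N_def[symmetric] weyl_chamber_roots_def by blast
    obtain x1 where x1: "x1 - x' \<in> span (rvec ` root_n G h 0)" "\<forall>r\<in>root_n G h 0. rbf G (rvec r) x1 \<noteq> 0"
      "\<forall>s\<in>rvec ` N. (rbf G s x' > 0 \<longrightarrow> rbf G s x1 > 0) \<and> (rbf G s x' < 0 \<longrightarrow> rbf G s x1 < 0)"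
      using perturb[OF finR rootsR, of "rvec ` N" x'] finR unfolding N_def by auto
    have "span (rvec ` N) \<subseteq> span (rvec ` root_n G h 0)" unfolding N_def by (intro span_mono) auto
    then have "x1 \<in> span (rvec ` root_n G h 0)" using x1(1) x'(1)
      by (metis diff_add_cancel span_add subsetD)
    then have gen1: "generic G h x1" unfolding generic_def using x1(2) by blast
    have face1: "r \<in> chP G h x1 \<and> (\<forall>l\<in>\<Gamma>. bf G l r = 0) \<longleftrightarrow> r \<in> P'" for r
    proof (cases "r \<in> N")
      case True
      have "rbf G (rvec r) x' \<noteq> 0" using x'(2) True by blast
      then have "rbf G (rvec r) x1 > 0 \<longleftrightarrow> rbf G (rvec r) x' > 0" using x1(3) True by force
      then show ?thesis using True x'(3) unfolding N_def chP_def by auto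
    next
      case False
      then show ?thesis using x'(3) unfolding N_def chP_def by auto
    qed
    from descent[OF pol nosep gen1] obtain x2 where x2: "generic G h x2"
      "\<forall>r. (r \<in> chP G h x2 \<and> (\<forall>l\<in>\<Gamma>. bf G l r = 0)) \<longleftrightarrow> (r \<in> chP G h x1 \<and> (\<forall>l\<in>\<Gamma>. bf G l r = 0))"
      "\<forall>e\<in>simple_roots (chP G h x2). \<forall>l\<in>\<Gamma>. bf G l e \<ge> 0" by blast
    have c2: "compatible G h (chP G h x2) \<Gamma>" using compat_of x2(3) by blast
    have face_iff: "is_face (chP G h y) P' L \<longleftrightarrow> (\<forall>r. r \<in> chP G h y \<and> (\<forall>l\<in>\<Gamma>. bf G l r = 0) \<longleftrightarrow> r \<in> P')" for y
    proof -
      have "chP G h y \<inter> L = {r. r \<in> chP G h y \<and> (\<forall>l\<in>\<Gamma>. bf G l r = 0)}"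
        using LN chP_sub[OF pol] by blast
      then show ?thesis unfolding is_face_def by auto
    qed
    have f2: "is_face (chP G h x2) P' L" unfolding face_iff using x2(2) face1 by blast
    show "\<exists>!P. weyl_chamber G (rt G h) P \<and> compatible G h P \<Gamma> \<and> is_face P P' L"
    proof (rule ex1I[of _ "chP G h x2"])
      show "weyl_chamber G (rt G h) (chP G h x2) \<and> compatible G h (chP G h x2) \<Gamma> \<and> is_face (chP G h x2) P' L"
        using wc_rt[OF pol] x2(1) c2 f2 by blast
    next
      fix P assume P: "weyl_chamber G (rt G h) P \<and> compatible G h P \<Gamma> \<and> is_face P P' L"
      then obtain y where y: "generic G h y" "P = chP G h y" using wc_rt[OF pol] by blast
      have cy: "compatible G h (chP G h y) \<Gamma>" using P y by simp
      have fy: "is_face (chP G h y) P' L" using P y by simp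
      have "chP G h y \<inter> L = chP G h x2 \<inter> L" using fy f2 unfolding is_face_def by simp
      then have s1: "chP G h y \<subseteq> chP G h x2" and s2: "chP G h x2 \<subseteq> chP G h y"
        using uniq_sub[OF pol y(1) cy x2(1) c2] uniq_sub[OF pol x2(1) c2 y(1) cy]
        unfolding L_def by auto
      show "P = chP G h x2" using y(2) s1 s2 by blast
    qed
  qed
  show ?thesis using part1 part2 unfolding L_def by blast
qed


end
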